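(* Fix $R_t>0$, $R_s=2^{R_t}$, all parameters $p_B,p_E,m_B,m_E,K_{B,r},K_{E,r}$ ($r=1,2$) and $\bar\gamma_E$, and regard the secrecy outage probability $P_o=\int_0^\infty F_B(R_s\gamma+R_s-1)f_E(\gamma)\,d\gamma$ as a function of $\bar\gamma_B$. Then the secrecy diversity order is $$G_d:=-\lim_{\bar\gamma_B\to\infty}\frac{\log P_o}{\log\bar\gamma_B}=1,$$ independently of $m_\ell$, $K_{\ell,r}$ and $p_\ell$.
   Context: Setting. For each $\ell\in\{B,E\}$ (legitimate receiver $B$, eavesdropper $E$) fix parameters $p_\ell\in[0,1]$, $m_\ell>0$, $K_{\ell,1},K_{\ell,2}>0$ and $\bar\gamma_\ell>0$; put $\bar K_\ell=p_\ell K_{\ell,1}+(1-p_\ell)K_{\ell,2}$, $Q_{\ell,1}=p_\ell$, $Q_{\ell,2}=1-p_\ell$. For $r\in\{1,2\}$ and $\gamma\ge0$ let $f_{RS,\ell,r}(\gamma)=\frac{1+\bar K_\ell}{\bar\gamma_\ell}\big(\frac{m_\ell}{m_\ell+K_{\ell,r}}\big)^{m_\ell}\exp\big(-\frac{(1+\bar K_\ell)\gamma}{\bar\gamma_\ell}\big)\,{}_1F_1\big(m_\ell;1;\frac{K_{\ell,r}(1+\bar K_\ell)\gamma}{\bar\gamma_\ell(m_\ell+K_{\ell,r})}\big)$ and $F_{RS,\ell,r}(\gamma)=\int_0^\gamma f_{RS,\ell,r}(t)\,dt$, where ${}_1F_1$ is Kummer's confluent hypergeometric function. The Alternate Rician Shadowed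 (ARS) SNR $\gamma_\ell$ has density $f_\ell=Q_{\ell,1}f_{RS,\ell,1}+Q_{\ell,2}f_{RS,\ell,2}$ and CDF $F_\ell=Q_{\ell,1}F_{RS,\ell,1}+Q_{\ell,2}F_{RS,\ell,2}$ on $[0,\infty)$; $\gamma_B,\gamma_E$ are independent. *)

theory Defs
  imports "HOL-Analysis.Analysis"
begin

definition kummer1F1 :: "real \<Rightarrow> real \<Rightarrow> real \<Rightarrow> real" where
  "kummer1F1 a b z = (\<Sum>n. pochhammer a n / pochhammer b n * z ^ n / fact n)"

definition Kbar :: "real \<Rightarrow> real \<Rightarrow> real \<Rightarrow> real" where
  "Kbar p K1 K2 = p * K1 + (1 - p) * K2"

text \<open>Rician shadowed density with shape m, Rician factor K, common factor Kb, mean SNR gb.\<close>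
definition fRS :: "real \<Rightarrow> real \<Rightarrow> real \<Rightarrow> real \<Rightarrow> real \<Rightarrow> real" where
  "fRS m Kb K gb x =
     (1 + Kb) / gb * (m / (m + K)) powr m * exp (- (1 + Kb) * x / gb)
     * kummer1F1 m 1 (K * (1 + Kb) * x / (gb * (m + K)))"

definition fARS :: "real \<Rightarrow> real \<Rightarrow> real \<Rightarrow> real \<Rightarrow> real \<Rightarrow> real \<Rightarrow> real" where
  "fARS p m K1 K2 gb x =
     p * fRS m (Kbar p K1 K2) K1 gb x + (1 - p) * fRS m (Kbar p K1 K2) K2 gb x"

definition FARS :: "real \<Rightarrow> real \<Rightarrow> real \<Rightarrow> real \<Rightarrow> real \<Rightarrow> real \<Rightarrow> real" where
  "FARS p m K1 K2 gb x = integral {0..x} (fARS p m K1 K2 gb)"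

definition SOP :: "real \<Rightarrow> real \<Rightarrow> real \<Rightarrow> real \<Rightarrow> real \<Rightarrow>
                   real \<Rightarrow> real \<Rightarrow> real \<Rightarrow> real \<Rightarrow> real \<Rightarrow> real \<Rightarrow> real" where
  "SOP Rt pB mB KB1 KB2 gB pE mE KE1 KE2 gE =
     integral {0..} (\<lambda>x. FARS pB mB KB1 KB2 gB ((2 powr Rt) * x + (2 powr Rt) - 1)
                        * fARS pE mE KE1 KE2 gE x)"

end

theory Submission
  imports Defs
begin


lemma coef_bound:
  fixes m r :: real
  assumes m: "m > 0" and r0: "0 \<le> r" and r1: "r < 1"
  shows "\<exists>A. \<forall>n. pochhammer m n * r^n / fact n \<le> A"
proof -
  define a where "a n = pochhammer m n * r^n / fact n" for n
  have a0: "a n \<ge> 0" for n unfolding a_def using m r0 by (simp add: pochhammer_nonneg)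
  have aS: "a (Suc n) = a n * ((m + n) * r / (n + 1))" for n
    unfolding a_def by (simp add: pochhammer_Suc field_simps)
  obtain N :: nat where N: "real N \<ge> (m * r - 1) / (1 - r)" using real_arch_simple by blast
  have dec: "a (Suc n) \<le> a n" if "n \<ge> N" for n
  proof -
    have "real n \<ge> (m * r - 1) / (1 - r)" using N that by linarith
    hence "real n * (1 - r) \<ge> m * r - 1" using r1 by (simp add: field_simps)
    hence "(m + n) * r / (n + 1) \<le> 1" by (simp add: field_simps)
    thus ?thesis using aS[of n] a0[of n] by (metis mult_left_le mult.commute)
  qed
  have "a n \<le> a N" if "n \<ge> N" for n
    using that
  proof (induction n rule: dec_induct)
    case base then show ?case by simp
  next
    case (step n) then show ?case using dec[of n] by linarith
  qed
  moreover have "a n \<le> (\<Sum>k\<le>N. a k)" if "n \<le> N" for n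
    using that a0 by (intro member_le_sum) auto
  ultimately have "a n \<le> (\<Sum>k\<le>N. a k)" for n
    by (metis atMost_iff member_le_sum a0 nle_le order.trans finite_atMost)
  thus ?thesis unfolding a_def by blast
qed




lemma kterm_eq: "pochhammer m n / pochhammer 1 n * z ^ n / fact n
   = (pochhammer m n * r^n / fact n) * ((z / r)^n / fact n)" if "r > 0" for m z r :: real
  using that by (simp add: pochhammer_fact[symmetric] power_divide field_simps)

lemma exp_summable': "summable (\<lambda>n. (x::real)^n / fact n)"
  using sums_summable[OF exp_converges[of x]] by (simp add: divide_inverse mult.commute)

lemma exp_sums': "(\<lambda>n. (x::real)^n / fact n) sums exp x"
  using exp_converges[of x] by (simp add: divide_inverse mult.commute)

lemma kummer_summable:
  fixes m z :: real assumes m: "m > 0"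
  shows "summable (\<lambda>n. pochhammer m n / pochhammer 1 n * z ^ n / fact n)"
proof -
  obtain A where A: "\<And>n. pochhammer m n * (1/2)^n / fact n \<le> A"
    using coef_bound[OF m, of "1/2"] by auto
  show ?thesis
  proof (rule summable_comparison_test)
    show "\<exists>N. \<forall>n\<ge>N. norm (pochhammer m n / pochhammer 1 n * z ^ n / fact n) \<le> A * ((\<bar>z\<bar> / (1/2))^n / fact n)"
    proof (intro exI allI impI)
      fix n :: nat
      have "norm (pochhammer m n / pochhammer 1 n * z ^ n / fact n)
          = pochhammer m n / pochhammer 1 n * \<bar>z\<bar> ^ n / fact n"
        using m by (simp add: abs_mult power_abs pochhammer_nonneg abs_of_nonneg)
      also have "\<dots> = (pochhammer m n * (1/2)^n / fact n) * ((\<bar>z\<bar> / (1/2))^n / fact n)"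
        by (rule kterm_eq) simp
      also have "\<dots> \<le> A * ((\<bar>z\<bar> / (1/2))^n / fact n)"
        by (rule mult_right_mono[OF A]) simp
      finally show "norm (pochhammer m n / pochhammer 1 n * z ^ n / fact n) \<le> A * ((\<bar>z\<bar> / (1/2))^n / fact n)" .
    qed
    show "summable (\<lambda>n. A * ((\<bar>z\<bar> / (1/2))^n / fact n))"
      by (intro summable_mult exp_summable')
  qed
qed

lemma kummer_ge1:
  fixes m z :: real assumes m: "m > 0" and z: "z \<ge> 0"
  shows "kummer1F1 m 1 z \<ge> 1"
proof -
  have "(\<Sum>n\<in>{0}. pochhammer m n / pochhammer 1 n * z ^ n / fact n)
        \<le> (\<Sum>n. pochhammer m n / pochhammer 1 n * z ^ n / fact n)"
    by (rule sum_le_suminf[OF kummer_summable[OF m]])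
       (use m z in \<open>auto simp: pochhammer_nonneg pochhammer_pos\<close>)
  thus ?thesis unfolding kummer1F1_def by simp
qed

lemma kummer_le:
  fixes m z r A :: real assumes m: "m > 0" and z: "z \<ge> 0" and r: "r > 0"
    and A: "\<And>n. pochhammer m n * r^n / fact n \<le> A"
  shows "kummer1F1 m 1 z \<le> A * exp (z / r)"
proof -
  have "kummer1F1 m 1 z \<le> (\<Sum>n. A * ((z / r)^n / fact n))"
    unfolding kummer1F1_def
  proof (rule suminf_le)
    show "pochhammer m n / pochhammer 1 n * z ^ n / fact n \<le> A * ((z / r)^n / fact n)" for n
      unfolding kterm_eq[OF r] by (rule mult_right_mono[OF A]) (use z r in simp)
  next
    show "summable (\<lambda>n. pochhammer m n / pochhammer 1 n * z ^ n / fact n)"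
      by (rule kummer_summable[OF m])
  next
    show "summable (\<lambda>n. A * ((z / r)^n / fact n))"
      by (intro summable_mult exp_summable')
  qed
  also have "\<dots> = A * exp (z / r)"
    using sums_unique[OF sums_mult[OF exp_sums', of A]] by simp
  finally show ?thesis .
qed

lemma kummer_cont:
  fixes m :: real assumes m: "m > 0"
  shows "isCont (kummer1F1 m 1) x"
proof -
  have eq: "kummer1F1 m 1 = (\<lambda>z. \<Sum>n. (pochhammer m n / pochhammer 1 n / fact n) * z ^ n)"
    unfolding kummer1F1_def by (intro ext suminf_cong) (simp add: field_simps)
  show ?thesis unfolding eq
    by (rule isCont_powser_converges_everywhere)
       (use kummer_summable[OF m] in \<open>simp add: field_simps\<close>)
qed




lemma kappa_bounds:
  fixes m K :: real assumes "m > 0" "K > 0"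
  shows "(m / (m + K)) powr m > 0" "(m / (m + K)) powr m \<le> 1"
  using assms by (auto intro!: powr_le1)

lemma fRS_lower:
  fixes m K Kb gb x :: real
  assumes m: "m > 0" and K: "K > 0" and Kb: "Kb > 0" and gb: "gb > 0" and x: "x \<ge> 0"
  shows "fRS m Kb K gb x \<ge> (1 + Kb) / gb * (m / (m + K)) powr m * exp (- (1 + Kb) * x / gb)"
proof -
  have "kummer1F1 m 1 (K * (1 + Kb) * x / (gb * (m + K))) \<ge> 1"
    by (rule kummer_ge1[OF m]) (use K Kb gb x m in auto)
  moreover have "(1 + Kb) / gb * (m / (m + K)) powr m * exp (- (1 + Kb) * x / gb) \<ge> 0"
    using Kb gb by auto
  ultimately show ?thesis unfolding fRS_def
    by (metis mult_left_mono mult.right_neutral)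
qed

lemma fRS_upper:
  fixes m K Kb gb x r A :: real
  assumes m: "m > 0" and K: "K > 0" and Kb: "Kb > 0" and gb: "gb > 0" and x: "x \<ge> 0"
    and r: "r > 0" and A: "\<And>n. pochhammer m n * r^n / fact n \<le> A"
  shows "fRS m Kb K gb x \<le> (1 + Kb) / gb * A * exp (- (1 - K / (m + K) / r) * ((1 + Kb) * x / gb))"
proof -
  define z where "z = K * (1 + Kb) * x / (gb * (m + K))"
  have z0: "z \<ge> 0" unfolding z_def using K Kb gb x m by auto
  have kl: "kummer1F1 m 1 z \<le> A * exp (z / r)" by (rule kummer_le[OF m z0 r A])
  have A0: "A \<ge> 0" using A[of 0] by simp
  have "fRS m Kb K gb x = (1 + Kb) / gb * (m / (m + K)) powr m * exp (- (1 + Kb) * x / gb) * kummer1F1 m 1 z"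
    unfolding fRS_def z_def by simp
  also have "\<dots> \<le> (1 + Kb) / gb * 1 * exp (- (1 + Kb) * x / gb) * (A * exp (z / r))"
    apply (intro mult_mono kl mult_right_mono kappa_bounds(2)[OF m K] order_refl)
    using Kb gb kummer_ge1[OF m z0] A0 by auto
  also have "\<dots> = (1 + Kb) / gb * A * exp (- (1 + Kb) * x / gb + z / r)"
    by (simp add: exp_add)
  also have "- (1 + Kb) * x / gb + z / r = - (1 - K / (m + K) / r) * ((1 + Kb) * x / gb)"
  proof -
    have "m + K \<noteq> 0" "gb \<noteq> 0" "r \<noteq> 0" using m K gb r by auto
    then show ?thesis unfolding z_def by (simp add: divide_simps) (simp add: algebra_simps)
  qed
  finally show ?thesis .
qed

lemma isCont_kummer_comp:
  "m > 0 \<Longrightarrow> isCont g x \<Longrightarrow> isCont (\<lambda>x. kummer1F1 m 1 (g x)) x"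
  by (rule isCont_o2[OF _ kummer_cont])
lemma fRS_cont: assumes m: "m > 0" shows "isCont (fRS m Kb K gb) x"
proof -
  have 1: "isCont (\<lambda>x. kummer1F1 m 1 (K * (1 + Kb) * x / (gb * (m + K)))) x"
  proof (rule isCont_kummer_comp[OF m])
    have eq: "(\<lambda>x. K * (1 + Kb) * x / (gb * (m + K))) = (\<lambda>x. (K * (1 + Kb) / (gb * (m + K))) * x)"
      by auto
    show "isCont (\<lambda>x. K * (1 + Kb) * x / (gb * (m + K))) x"
      by (subst eq, rule isCont_mult[OF continuous_const continuous_ident])
  qed
  have eq2: "(\<lambda>x. - (1 + Kb) * x / gb) = (\<lambda>x. (- (1 + Kb) / gb) * x)" by auto
  have 2: "isCont (\<lambda>x. exp (- (1 + Kb) * x / gb)) x"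
    by (rule isCont_exp', subst eq2, rule isCont_mult[OF continuous_const continuous_ident])
  have "isCont (\<lambda>x. (1 + Kb) / gb * (m / (m + K)) powr m * exp (- (1 + Kb) * x / gb)
     * kummer1F1 m 1 (K * (1 + Kb) * x / (gb * (m + K)))) x"
    by (rule isCont_mult[OF isCont_mult[OF continuous_const 2] 1])
  then show ?thesis unfolding fRS_def .
qed

lemma fARS_cont: "m > 0 \<Longrightarrow> continuous_on UNIV (fARS p m K1 K2 gb)"
  unfolding fARS_def using fRS_cont
  by (intro continuous_at_imp_continuous_on ballI isCont_add isCont_mult continuous_const fRS_cont)




lemma Kbar_pos:
  fixes p K1 K2 :: real
  assumes "0 \<le> p" "p \<le> 1" "K1 > 0" "K2 > 0"
  shows "Kbar p K1 K2 > 0"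
proof -
  have "p * K1 \<ge> 0" "(1 - p) * K2 \<ge> 0" using assms by auto
  moreover have "p * K1 > 0 \<or> (1 - p) * K2 > 0" using assms
    by (cases "p = 0") auto
  ultimately show ?thesis unfolding Kbar_def by linarith
qed

locale ars =
  fixes p m K1 K2 :: real
  assumes p0: "0 \<le> p" and p1: "p \<le> 1" and m: "m > 0" and K1: "K1 > 0" and K2: "K2 > 0"
begin

abbreviation "Kb \<equiv> Kbar p K1 K2"

lemma Kb_pos: "Kb > 0" using Kbar_pos[OF p0 p1 K1 K2] .

definition "kmin = min ((m / (m + K1)) powr m) ((m / (m + K2)) powr m)"

lemma kmin_pos: "kmin > 0"
  unfolding kmin_def using kappa_bounds(1)[OF m K1] kappa_bounds(1)[OF m K2] by simp

lemma fARS_lower: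
  assumes gb: "gb > 0" and x: "x \<ge> 0"
  shows "fARS p m K1 K2 gb x \<ge> (1 + Kb) / gb * kmin * exp (- (1 + Kb) * x / gb)"
proof -
  define L where "L = (1 + Kb) / gb * exp (- (1 + Kb) * x / gb)"
  have L0: "L \<ge> 0" unfolding L_def using Kb_pos gb by auto
  have l1: "fRS m Kb K1 gb x \<ge> L * (m / (m + K1)) powr m"
    using fRS_lower[OF m K1 Kb_pos gb x] unfolding L_def by (simp add: algebra_simps)
  have l2: "fRS m Kb K2 gb x \<ge> L * (m / (m + K2)) powr m"
    using fRS_lower[OF m K2 Kb_pos gb x] unfolding L_def by (simp add: algebra_simps)
  have "L * kmin \<le> L * (m / (m + K1)) powr m" "L * kmin \<le> L * (m / (m + K2)) powr m"
    unfolding kmin_def using L0 by (auto intro: mult_left_mono)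
  hence "p * (L * kmin) + (1 - p) * (L * kmin) \<le> p * fRS m Kb K1 gb x + (1 - p) * fRS m Kb K2 gb x"
    using l1 l2 p0 p1 by (intro add_mono mult_left_mono) auto
  moreover have "p * (L * kmin) + (1 - p) * (L * kmin) = L * kmin" by (simp add: algebra_simps)
  moreover have "L * kmin = (1 + Kb) / gb * kmin * exp (- (1 + Kb) * x / gb)"
    unfolding L_def by simp
  ultimately show ?thesis unfolding fARS_def by linarith
qed

lemma fARS_nonneg:
  assumes gb: "gb > 0" and x: "x \<ge> 0"
  shows "fARS p m K1 K2 gb x \<ge> 0"
proof -
  have "(1 + Kb) / gb * kmin * exp (- (1 + Kb) * x / gb) \<ge> 0"
    using Kb_pos gb kmin_pos by auto
  thus ?thesis using fARS_lower[OF gb x] by linarith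
qed

lemma fARS_upper:
  assumes gb: "gb > 0" and x: "x \<ge> 0"
    and r1: "r1 > 0" and A1: "\<And>n. pochhammer m n * r1^n / fact n \<le> A1"
    and r2: "r2 > 0" and A2: "\<And>n. pochhammer m n * r2^n / fact n \<le> A2"
    and d1: "d \<le> 1 - K1 / (m + K1) / r1" and d2: "d \<le> 1 - K2 / (m + K2) / r2"
  shows "fARS p m K1 K2 gb x \<le> (1 + Kb) / gb * max A1 A2 * exp (- d * ((1 + Kb) * x / gb))"
proof -
  define u where "u = (1 + Kb) * x / gb"
  have u0: "u \<ge> 0" unfolding u_def using Kb_pos gb x by auto
  have c0: "(1 + Kb) / gb \<ge> 0" using Kb_pos gb by auto
  have A10: "A1 \<ge> 0" using A1[of 0] by simp
  have A20: "A2 \<ge> 0" using A2[of 0] by simp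
  have "d * u \<le> (1 - K1 / (m + K1) / r1) * u" by (rule mult_right_mono[OF d1 u0])
  hence e1: "exp (- (1 - K1 / (m + K1) / r1) * u) \<le> exp (- d * u)" by (simp add: algebra_simps)
  have "d * u \<le> (1 - K2 / (m + K2) / r2) * u" by (rule mult_right_mono[OF d2 u0])
  hence e2: "exp (- (1 - K2 / (m + K2) / r2) * u) \<le> exp (- d * u)" by (simp add: algebra_simps)
  have b1: "fRS m Kb K1 gb x \<le> (1 + Kb) / gb * max A1 A2 * exp (- d * u)"
  proof -
    have "fRS m Kb K1 gb x \<le> (1 + Kb) / gb * A1 * exp (- (1 - K1 / (m + K1) / r1) * u)"
      using fRS_upper[OF m K1 Kb_pos gb x r1 A1] unfolding u_def .
    also have "\<dots> \<le> (1 + Kb) / gb * max A1 A2 * exp (- d * u)"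
    proof (rule mult_mono[OF _ e1])
      show "(1 + Kb) / gb * A1 \<le> (1 + Kb) / gb * max A1 A2" by (rule mult_left_mono[OF _ c0]) simp
      have "0 \<le> max A1 A2" using A10 by linarith
      then show "0 \<le> (1 + Kb) / gb * max A1 A2" using c0 by (rule mult_nonneg_nonneg[rotated])
    qed simp
    finally show ?thesis .
  qed
  have b2: "fRS m Kb K2 gb x \<le> (1 + Kb) / gb * max A1 A2 * exp (- d * u)"
  proof -
    have "fRS m Kb K2 gb x \<le> (1 + Kb) / gb * A2 * exp (- (1 - K2 / (m + K2) / r2) * u)"
      using fRS_upper[OF m K2 Kb_pos gb x r2 A2] unfolding u_def .
    also have "\<dots> \<le> (1 + Kb) / gb * max A1 A2 * exp (- d * u)"
    proof (rule mult_mono[OF _ e2])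
      show "(1 + Kb) / gb * A2 \<le> (1 + Kb) / gb * max A1 A2" by (rule mult_left_mono[OF _ c0]) simp
      have "0 \<le> max A1 A2" using A20 by linarith
      then show "0 \<le> (1 + Kb) / gb * max A1 A2" using c0 by (rule mult_nonneg_nonneg[rotated])
    qed simp
    finally show ?thesis .
  qed
  define T where "T = (1 + Kb) / gb * max A1 A2 * exp (- d * u)"
  have "fARS p m K1 K2 gb x \<le> p * T + (1 - p) * T"
    unfolding fARS_def T_def using b1 b2 p0 p1 by (intro add_mono mult_left_mono) auto
  also have "p * T + (1 - p) * T = T" by (simp add: algebra_simps)
  finally show ?thesis unfolding T_def u_def .
qed

lemma fARS_int: "fARS p m K1 K2 gb integrable_on {a..b}"
  by (rule integrable_continuous_interval, rule continuous_on_subset[OF fARS_cont[OF m]]) auto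

lemma FARS_cont:
  assumes y: "y > 0" shows "isCont (FARS p m K1 K2 gb) y"
proof -
  have "((\<lambda>x. integral {0..x} (fARS p m K1 K2 gb)) has_real_derivative fARS p m K1 K2 gb y)
          (at y within {0..y+1})"
    by (rule integral_has_real_derivative) (use y continuous_on_subset[OF fARS_cont[OF m]] in auto)
  moreover have "at y within {0..y+1} = at y"
    by (rule at_within_interior) (use y in auto)
  ultimately have "(FARS p m K1 K2 gb has_real_derivative fARS p m K1 K2 gb y) (at y)"
    unfolding FARS_def[abs_def] by simp
  thus ?thesis by (rule DERIV_isCont)
qed

lemma FARS_nonneg:
  assumes gb: "gb > 0" shows "FARS p m K1 K2 gb y \<ge> 0"
  unfolding FARS_def by (rule integral_nonneg[OF fARS_int]) (use fARS_nonneg[OF gb] in auto)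

lemma FARS_upper:
  assumes gb: "gb > 0" and y: "y \<ge> 0" and C: "\<And>x. x \<ge> 0 \<Longrightarrow> fARS p m K1 K2 gb x \<le> C"
  shows "FARS p m K1 K2 gb y \<le> C * y"
proof -
  have "FARS p m K1 K2 gb y \<le> integral {0..y} (\<lambda>_. C)"
    unfolding FARS_def by (rule integral_le[OF fARS_int]) (use C in auto)
  also have "\<dots> = C * y" using y by (simp add: content_real)
  finally show ?thesis .
qed

lemma FARS_lower:
  assumes gb: "gb > 0" and d: "d \<ge> 0" and dy: "d \<le> y" and C: "\<And>x. 0 \<le> x \<Longrightarrow> x \<le> d \<Longrightarrow> fARS p m K1 K2 gb x \<ge> C"
  shows "FARS p m K1 K2 gb y \<ge> C * d"
proof -
  have "C * d = integral {0..d} (\<lambda>_. C)" using d by (simp add: content_real)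
  also have "\<dots> \<le> integral {0..d} (fARS p m K1 K2 gb)"
    by (rule integral_le[OF _ fARS_int]) (use C in auto)
  also have "\<dots> \<le> FARS p m K1 K2 gb y"
    unfolding FARS_def by (rule integral_subset_le[OF _ fARS_int fARS_int]) (use dy fARS_nonneg[OF gb] in auto)
  finally show ?thesis .
qed

end



lemma closed_ge_lebesgue: "{(0::real)..} \<in> sets lebesgue"
  by simp

lemma cont_bound_integrable:
  fixes f g :: "real \<Rightarrow> real"
  assumes "continuous_on {0..} f" "g integrable_on {0..}" "\<And>x. x \<ge> 0 \<Longrightarrow> \<bar>f x\<bar> \<le> g x"
  shows "f integrable_on {0..}"
  by (rule measurable_bounded_by_integrable_imp_integrable_real[OF
        continuous_imp_measurable_on_sets_lebesgue[OF assms(1) closed_ge_lebesgue] assms(2)])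
     (use assms(3) in auto)

lemma exp_int: "l > 0 \<Longrightarrow> (\<lambda>x. exp (- l * x)) integrable_on {(0::real)..}"
  using integrable_on_exp_minus_to_infinity[of l 0] by simp

lemma xexp_int:
  fixes l :: real assumes l: "l > 0"
  shows "(\<lambda>x. x * exp (- l * x)) integrable_on {0..}"
proof (rule cont_bound_integrable)
  show "continuous_on {0..} (\<lambda>x. x * exp (- l * x))" by (intro continuous_intros)
  show "(\<lambda>x. (2 / l) * exp (- (l / 2) * x)) integrable_on {0..}"
    by (subst integrable_on_cmult_iff) (use l exp_int[of "l/2"] in auto)
  fix x :: real assume x: "x \<ge> 0"
  have "1 + l * x / 2 \<le> exp (l * x / 2)" by (rule exp_ge_add_one_self)
  hence "x \<le> (2 / l) * exp (l * x / 2)" using l by (simp add: field_simps)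
  hence "x * exp (- l * x) \<le> (2 / l) * exp (l * x / 2) * exp (- l * x)"
    by (rule mult_right_mono) simp
  also have "\<dots> = (2 / l) * exp (- (l / 2) * x)"
    by (simp add: mult.assoc exp_add[symmetric])
  finally show "\<bar>x * exp (- l * x)\<bar> \<le> (2 / l) * exp (- (l / 2) * x)" using x by simp
qed




lemma ln_ratio_lim: "((\<lambda>x::real. 1 - c / ln x) \<longlongrightarrow> 1) at_top"
proof -
  have "((\<lambda>x::real. c / ln x) \<longlongrightarrow> 0) at_top"
    by (rule tendsto_divide_0[OF tendsto_const filterlim_at_top_imp_at_infinity[OF ln_at_top]])
  from tendsto_diff[OF tendsto_const this, of 1] show ?thesis by simp
qed

lemma limit_from_bounds:
  fixes P :: "real \<Rightarrow> real" and c1 c2 :: real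
  assumes c1: "c1 > 0" and lo: "\<And>x. x \<ge> 1 \<Longrightarrow> c1 / x \<le> P x" and hi: "\<And>x. x \<ge> 1 \<Longrightarrow> P x \<le> c2 / x"
  shows "((\<lambda>x. - ln (P x) / ln x) \<longlongrightarrow> 1) at_top"
proof (rule tendsto_sandwich[OF _ _ ln_ratio_lim[of "ln c2"] ln_ratio_lim[of "ln c1"]])
  have b: "1 - ln c2 / ln x \<le> - ln (P x) / ln x \<and> - ln (P x) / ln x \<le> 1 - ln c1 / ln x" if x: "x > 1" for x
  proof -
    have lx: "ln x > 0" using x by simp
    have P1: "c1 / x \<le> P x" and P2: "P x \<le> c2 / x" using lo hi x by auto
    have c1x: "c1 / x > 0" using c1 x by simp
    have Ppos: "P x > 0" using P1 c1x by linarith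
    have c2x: "c2 / x > 0" using P2 Ppos by linarith
    have c2: "c2 > 0" using c2x x by (simp add: zero_less_divide_iff)
    have "ln (c1 / x) \<le> ln (P x)" using P1 c1x by simp
    hence l1: "ln c1 - ln x \<le> ln (P x)" using c1 x by (simp add: ln_div)
    have "ln (P x) \<le> ln (c2 / x)" using P2 Ppos by simp
    hence l2: "ln (P x) \<le> ln c2 - ln x" using c2 x by (simp add: ln_div)
    have e1: "1 - ln c2 / ln x = (ln x - ln c2) / ln x" using lx by (simp add: field_simps)
    have e2: "1 - ln c1 / ln x = (ln x - ln c1) / ln x" using lx by (simp add: field_simps)
    have "(ln x - ln c2) / ln x \<le> - ln (P x) / ln x"
      by (rule divide_right_mono) (use l2 lx in auto)
    moreover have "- ln (P x) / ln x \<le> (ln x - ln c1) / ln x"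
      by (rule divide_right_mono) (use l1 lx in auto)
    ultimately show ?thesis unfolding e1 e2 by simp
  qed
  show "\<forall>\<^sub>F x in at_top. 1 - ln c2 / ln x \<le> - ln (P x) / ln x"
    using eventually_gt_at_top[of 1] by eventually_elim (use b in blast)
  show "\<forall>\<^sub>F x in at_top. - ln (P x) / ln x \<le> 1 - ln c1 / ln x"
    using eventually_gt_at_top[of 1] by eventually_elim (use b in blast)
qed




lemma int_cmul: "f integrable_on S \<Longrightarrow> (\<lambda>x. (c::real) * f x) integrable_on S"
  using integrable_cmul[of f S c] by simp

theorem mainTheorem10:
  fixes Rt pB mB KB1 KB2 pE mE KE1 KE2 gE :: real
  assumes "Rt > 0"
    and "0 \<le> pB" "pB \<le> 1" "mB > 0" "KB1 > 0" "KB2 > 0"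
    and "0 \<le> pE" "pE \<le> 1" "mE > 0" "KE1 > 0" "KE2 > 0" "gE > 0"
  shows "((\<lambda>gB. - ln (SOP Rt pB mB KB1 KB2 gB pE mE KE1 KE2 gE) / ln gB) \<longlongrightarrow> 1) at_top"
proof -
  interpret B: ars pB mB KB1 KB2 by unfold_locales (use assms in auto)
  interpret E: ars pE mE KE1 KE2 by unfold_locales (use assms in auto)
  have gE: "gE > 0" using assms by simp
  define Rs where "Rs = (2::real) powr Rt"
  have Rs1: "Rs > 1" unfolding Rs_def using powr_less_mono[of 0 Rt 2] assms(1) by simp
  define dd where "dd = Rs - 1"
  have Rsx: "Rs * x \<ge> 0" if "x \<ge> 0" for x using Rs1 that by simp
  have Rsx1: "Rs * x + Rs - 1 \<ge> 0" if "x \<ge> 0" for x using Rsx[OF that] Rs1 by linarith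
  have dd: "dd > 0" unfolding dd_def using Rs1 by simp
  define fE where "fE = fARS pE mE KE1 KE2 gE"
  define FB where "FB = (\<lambda>gB. FARS pB mB KB1 KB2 gB)"
  define fB where "fB = (\<lambda>gB. fARS pB mB KB1 KB2 gB)"
  define cB1 where "cB1 = KB1 / (mB + KB1)"
  define cB2 where "cB2 = KB2 / (mB + KB2)"
  have cB1: "0 < cB1" "cB1 < 1" unfolding cB1_def using assms by auto
  have cB2: "0 < cB2" "cB2 < 1" unfolding cB2_def using assms by auto
  obtain AB1 where AB1: "\<And>n. pochhammer mB n * cB1^n / fact n \<le> AB1"
    using coef_bound[of mB cB1] cB1 assms by auto
  obtain AB2 where AB2: "\<And>n. pochhammer mB n * cB2^n / fact n \<le> AB2"
    using coef_bound[of mB cB2] cB2 assms by auto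
  define CB where "CB = (1 + B.Kb) * max AB1 AB2"
  have fB_up: "fB gB x \<le> CB / gB" if "gB > 0" "x \<ge> 0" for gB x
  proof -
    have "fB gB x \<le> (1 + B.Kb) / gB * max AB1 AB2 * exp (- 0 * ((1 + B.Kb) * x / gB))"
      unfolding fB_def
      by (rule B.fARS_upper[OF that cB1(1) AB1 cB2(1) AB2]) (use cB1 cB2 in \<open>simp_all add: cB1_def cB2_def\<close>)
    thus ?thesis unfolding CB_def by simp
  qed
  have FB_up: "FB gB y \<le> CB / gB * y" if "gB > 0" "y \<ge> 0" for gB y
    unfolding FB_def by (rule B.FARS_upper[OF that]) (use fB_up[OF that(1)] in \<open>simp add: fB_def\<close>)
  have FB_nn: "FB gB y \<ge> 0" if "gB > 0" for gB y
    unfolding FB_def by (rule B.FARS_nonneg[OF that])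
  define cL where "cL = (1 + B.Kb) * B.kmin * exp (- (1 + B.Kb) * dd) * dd"
  have cL: "cL > 0" unfolding cL_def using B.Kb_pos B.kmin_pos dd by auto
  have FB_lo: "FB gB (Rs * x + Rs - 1) \<ge> cL / gB" if gB: "gB \<ge> 1" and x: "x \<ge> 0" for gB x
  proof -
    define C where "C = (1 + B.Kb) / gB * B.kmin * exp (- (1 + B.Kb) * dd)"
    have "FB gB (Rs * x + Rs - 1) \<ge> C * dd"
      unfolding FB_def
    proof (rule B.FARS_lower)
      show "0 < gB" "0 \<le> dd" using gB dd by auto
      show "dd \<le> Rs * x + Rs - 1" unfolding dd_def using Rs1 x by simp
      fix t assume t: "0 \<le> t" "t \<le> dd"
      have "(1 + B.Kb) * t / gB \<le> (1 + B.Kb) * dd"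
      proof -
        have nn: "0 \<le> (1 + B.Kb) * t" using t B.Kb_pos by simp
        have "(1 + B.Kb) * t * 1 \<le> (1 + B.Kb) * t * gB" by (rule mult_left_mono[OF gB nn])
        hence "(1 + B.Kb) * t / gB \<le> (1 + B.Kb) * t" using gB by (simp add: divide_le_eq)
        also have "\<dots> \<le> (1 + B.Kb) * dd" using t B.Kb_pos by simp
        finally show ?thesis .
      qed
      hence "- ((1 + B.Kb) * dd) \<le> - ((1 + B.Kb) * t / gB)" by linarith
      moreover have "- (1 + B.Kb) * dd = - ((1 + B.Kb) * dd)" "- (1 + B.Kb) * t / gB = - ((1 + B.Kb) * t / gB)"
        by (simp only: minus_divide_left mult_minus_left)+
      ultimately have "exp (- (1 + B.Kb) * dd) \<le> exp (- (1 + B.Kb) * t / gB)"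
        by (simp only: exp_le_cancel_iff)
      hence "C \<le> (1 + B.Kb) / gB * B.kmin * exp (- (1 + B.Kb) * t / gB)"
        unfolding C_def using B.Kb_pos B.kmin_pos gB by (intro mult_left_mono) auto
      also have "\<dots> \<le> fARS pB mB KB1 KB2 gB t" by (rule B.fARS_lower) (use gB t in auto)
      finally show "C \<le> fARS pB mB KB1 KB2 gB t" .
    qed
    moreover have "C * dd = cL / gB" unfolding C_def cL_def by simp
    ultimately show ?thesis by simp
  qed

  define cE1 where "cE1 = KE1 / (mE + KE1)"
  define cE2 where "cE2 = KE2 / (mE + KE2)"
  have cE1: "0 < cE1" "cE1 < 1" unfolding cE1_def using assms by auto
  have cE2: "0 < cE2" "cE2 < 1" unfolding cE2_def using assms by auto
  define rE1 where "rE1 = (1 + cE1) / 2"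
  define rE2 where "rE2 = (1 + cE2) / 2"
  have rE1: "0 < rE1" "rE1 < 1" "cE1 < rE1" unfolding rE1_def using cE1 by auto
  have rE2: "0 < rE2" "rE2 < 1" "cE2 < rE2" unfolding rE2_def using cE2 by auto
  obtain AE1 where AE1: "\<And>n. pochhammer mE n * rE1^n / fact n \<le> AE1"
    using coef_bound[of mE rE1] rE1 assms by auto
  obtain AE2 where AE2: "\<And>n. pochhammer mE n * rE2^n / fact n \<le> AE2"
    using coef_bound[of mE rE2] rE2 assms by auto
  define \<delta> where "\<delta> = min (1 - cE1 / rE1) (1 - cE2 / rE2)"
  have \<delta>: "\<delta> > 0" unfolding \<delta>_def using rE1 rE2 by (auto simp: field_simps)
  define lam where "lam = \<delta> * (1 + E.Kb) / gE"
  have lam: "lam > 0" unfolding lam_def using \<delta> E.Kb_pos gE by auto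
  define CE where "CE = (1 + E.Kb) / gE * max AE1 AE2"
  have fE_up: "fE x \<le> CE * exp (- lam * x)" if x: "x \<ge> 0" for x
  proof -
    have "fE x \<le> (1 + E.Kb) / gE * max AE1 AE2 * exp (- \<delta> * ((1 + E.Kb) * x / gE))"
      unfolding fE_def
      by (rule E.fARS_upper[OF gE x rE1(1) AE1 rE2(1) AE2]) (simp_all add: \<delta>_def cE1_def cE2_def)
    also have "- \<delta> * ((1 + E.Kb) * x / gE) = - lam * x" unfolding lam_def by simp
    finally show ?thesis unfolding CE_def .
  qed
  have fE_nn: "fE x \<ge> 0" if "x \<ge> 0" for x unfolding fE_def by (rule E.fARS_nonneg[OF gE that])
  have fE_cont: "continuous_on UNIV fE" unfolding fE_def by (rule fARS_cont) (use assms in simp)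
  have CE0: "CE \<ge> 0" using fE_up[of 0] fE_nn[of 0] by simp
  have fE_int: "fE integrable_on {0..}"
  proof (rule cont_bound_integrable)
    show "continuous_on {0..} fE" by (rule continuous_on_subset[OF fE_cont]) simp
    show "(\<lambda>x. CE * exp (- lam * x)) integrable_on {0..}"
      by (rule int_cmul, rule exp_int[OF lam])
    show "\<bar>fE x\<bar> \<le> CE * exp (- lam * x)" if "x \<ge> 0" for x using fE_up[OF that] fE_nn[OF that] by simp
  qed
  define w where "w x = (Rs * x + Rs - 1) * fE x" for x
  have w_nn: "w x \<ge> 0" if "x \<ge> 0" for x
    unfolding w_def by (rule mult_nonneg_nonneg) (use fE_nn[OF that] Rsx1[OF that] in auto)
  have w_int: "w integrable_on {0..}"
  proof (rule cont_bound_integrable)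
    show "continuous_on {0..} w" unfolding w_def
      by (intro continuous_intros continuous_on_subset[OF fE_cont]) simp
    show "(\<lambda>x. Rs * CE * (x * exp (- lam * x)) + Rs * CE * exp (- lam * x)) integrable_on {0..}"
      by (intro integrable_add int_cmul xexp_int exp_int lam)
    show "\<bar>w x\<bar> \<le> Rs * CE * (x * exp (- lam * x)) + Rs * CE * exp (- lam * x)" if x: "x \<ge> 0" for x
    proof -
      have "\<bar>w x\<bar> = (Rs * x + Rs - 1) * fE x" using w_nn[OF x] unfolding w_def by simp
      also have "\<dots> \<le> (Rs * x + Rs) * (CE * exp (- lam * x))"
        by (rule mult_mono) (use fE_up[OF x] fE_nn[OF x] Rsx1[OF x] in auto)
      also have "\<dots> = Rs * CE * (x * exp (- lam * x)) + Rs * CE * exp (- lam * x)"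
        by (simp add: algebra_simps)
      finally show ?thesis .
    qed
  qed

  define Jw where "Jw = integral {0..} w"
  define IE where "IE = integral {0..} fE"
  define c0 where "c0 = (1 + E.Kb) / gE * E.kmin * exp (- (1 + E.Kb) / gE)"
  have c0: "c0 > 0" unfolding c0_def using E.Kb_pos E.kmin_pos gE by auto
  have IE: "IE \<ge> c0"
  proof -
    have "c0 = integral {0..1::real} (\<lambda>_. c0)" by (simp add: content_real)
    also have "\<dots> \<le> integral {0..1} fE"
    proof (rule integral_le)
      show "fE integrable_on {0..1}" unfolding fE_def by (rule E.fARS_int)
      fix x :: real assume "x \<in> {0..1}"
      hence x: "0 \<le> x" "x \<le> 1" by auto
      have "(1 + E.Kb) * x / gE \<le> (1 + E.Kb) / gE"
        using x E.Kb_pos gE by (simp add: divide_right_mono)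
      hence "- ((1 + E.Kb) / gE) \<le> - ((1 + E.Kb) * x / gE)" by linarith
      moreover have "- (1 + E.Kb) / gE = - ((1 + E.Kb) / gE)" "- (1 + E.Kb) * x / gE = - ((1 + E.Kb) * x / gE)"
        by (simp only: minus_divide_left mult_minus_left)+
      ultimately have "exp (- (1 + E.Kb) / gE) \<le> exp (- (1 + E.Kb) * x / gE)"
        by (simp only: exp_le_cancel_iff)
      hence "c0 \<le> (1 + E.Kb) / gE * E.kmin * exp (- (1 + E.Kb) * x / gE)"
        unfolding c0_def using E.Kb_pos E.kmin_pos gE by (intro mult_left_mono) auto
      also have "\<dots> \<le> fE x" unfolding fE_def by (rule E.fARS_lower[OF gE x(1)])
      finally show "c0 \<le> fE x" .
    qed (rule integrable_const_ivl)
    also have "\<dots> \<le> IE" unfolding IE_def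
      by (rule integral_subset_le) (use fE_int fE_nn in \<open>auto simp: fE_def intro: E.fARS_int\<close>)
    finally show ?thesis .
  qed
  define g where "g gB x = FB gB (Rs * x + Rs - 1) * fE x" for gB x
  have SOP_eq: "SOP Rt pB mB KB1 KB2 gB pE mE KE1 KE2 gE = integral {0..} (g gB)" for gB
    unfolding SOP_def g_def FB_def fE_def Rs_def by simp
  have g_int: "g gB integrable_on {0..}" and g_bounds: "\<And>x. x \<ge> 0 \<Longrightarrow> cL / gB * fE x \<le> g gB x \<and> g gB x \<le> CB / gB * w x"
    if gB: "gB \<ge> 1" for gB
  proof -
    have gB0: "gB > 0" using gB by simp
    show bnds: "cL / gB * fE x \<le> g gB x \<and> g gB x \<le> CB / gB * w x" if x: "x \<ge> 0" for x
    proof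
      show "cL / gB * fE x \<le> g gB x" unfolding g_def
        by (rule mult_right_mono[OF FB_lo[OF gB x] fE_nn[OF x]])
      have "g gB x \<le> (CB / gB * (Rs * x + Rs - 1)) * fE x" unfolding g_def
        by (rule mult_right_mono[OF FB_up[OF gB0 Rsx1[OF x]] fE_nn[OF x]])
      thus "g gB x \<le> CB / gB * w x" unfolding w_def by (simp add: mult.assoc)
    qed
    show "g gB integrable_on {0..}"
    proof (rule cont_bound_integrable)
      show "continuous_on {0..} (g gB)"
      proof (intro continuous_at_imp_continuous_on ballI)
        fix x :: real assume "x \<in> {0..}"
        hence x: "x \<ge> 0" by simp
        have "isCont (\<lambda>x. FB gB (Rs * x + Rs - 1)) x"
        proof (rule isCont_o2[where f = "\<lambda>x. Rs * x + Rs - 1" and g = "FB gB"])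
          show "isCont (\<lambda>x. Rs * x + Rs - 1) x" by (intro continuous_intros)
          show "isCont (FB gB) (Rs * x + Rs - 1)" unfolding FB_def
            by (rule B.FARS_cont) (use Rsx[OF x] Rs1 in linarith)
        qed
        moreover have "isCont fE x" using fE_cont by (simp add: continuous_on_eq_continuous_at)
        ultimately show "isCont (g gB) x" unfolding g_def[abs_def] by (intro isCont_mult)
      qed
      show "(\<lambda>x. CB / gB * w x) integrable_on {0..}" by (rule int_cmul[OF w_int])
      fix x :: real assume x: "x \<ge> 0"
      have "g gB x \<ge> 0" unfolding g_def by (rule mult_nonneg_nonneg[OF FB_nn[OF gB0] fE_nn[OF x]])
      thus "\<bar>g gB x\<bar> \<le> CB / gB * w x" using bnds[OF x] by simp
    qed
  qed
  have lo: "cL * IE / gB \<le> SOP Rt pB mB KB1 KB2 gB pE mE KE1 KE2 gE" if gB: "gB \<ge> 1" for gB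
  proof -
    have "cL * IE / gB = integral {0..} (\<lambda>x. cL / gB * fE x)"
      unfolding IE_def using integral_mult[OF fE_int, of "cL / gB"] by simp
    also have "\<dots> \<le> integral {0..} (g gB)"
      by (rule integral_le[OF int_cmul[OF fE_int] g_int[OF gB]]) (use g_bounds[OF gB] in auto)
    finally show ?thesis unfolding SOP_eq .
  qed
  have hi: "SOP Rt pB mB KB1 KB2 gB pE mE KE1 KE2 gE \<le> CB * Jw / gB" if gB: "gB \<ge> 1" for gB
  proof -
    have "integral {0..} (g gB) \<le> integral {0..} (\<lambda>x. CB / gB * w x)"
      by (rule integral_le[OF g_int[OF gB] int_cmul[OF w_int]]) (use g_bounds[OF gB] in auto)
    also have "\<dots> = CB * Jw / gB"
      unfolding Jw_def using integral_mult[OF w_int, of "CB / gB"] by simp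
    finally show ?thesis unfolding SOP_eq .
  qed
  show ?thesis
    by (rule limit_from_bounds[OF _ lo hi]) (use cL IE c0 in auto)
qed

end
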